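(* Let $\mathbf{F}\in[L^2(\mathbb{R}^2)]^2$ have compact support. Then $\mathbf{F}$ is uniquely determined by the multi-frequency far field data sets $$\mathcal{A}_p=\{u^\infty_{\mathbf{F},p}(\hat{\mathbf{x}},\omega):\ \hat{\mathbf{x}}\in\mathbb{S},\ \omega\in\mathbb{W}\}\quad\text{and}\quad \mathcal{A}_s=\{u^\infty_{\mathbf{F},s}(\hat{\mathbf{x}},\omega):\ \hat{\mathbf{x}}\in\mathbb{S},\ \omega\in\mathbb{W}\},$$ i.e., two compactly supported sources in $[L^2(\mathbb{R}^2)]^2$ having the same compressional and shear far field patterns for all $\hat{\mathbf{x}}\in\mathbb{S}$, $\omega\in\mathbb{W}$ coincide.
   Context: $\mathbb{W}=(\omega_{min},\omega_{max})$ with $0<\omega_{min}<\omega_{max}$; Lamé constants $\mu>0$, $2\mu+\lambda>0$; $k_p=\omega/\sqrt{\lambda+2\mu}$, $k_s=\omega/\sqrt\mu$. $\mathbb{S}$ is the unit circle and $\hat{\mathbf{x}}^\perp$ is $\hat{\mathbf{x}}$ rotated anticlockwise by $\pi/2$. The far field patterns of the source $\mathbf{F}$ (i.e., of the radiating solution of $\mu\Delta\mathbf{u}+(\lambda+\mu)\nabla\mathrm{div}\,\mathbf{u}+\omega^2\mathbf{u}=\mathbf{F}$) are $u^\infty_{\mathbf{F},p}(\hat{\mathbf{x}},\omega)=\int_{\mathbb{R}^2}e^{-ik_p\hat{\mathbf{x}}\cdot\mathbf{y}}\,\hat{\mathbf{x}}\cdot\mathbf{F}(\mathbf{y})\,d\mathbf{y}$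 and $u^\infty_{\mathbf{F},s}(\hat{\mathbf{x}},\omega)=\int_{\mathbb{R}^2}e^{-ik_s\hat{\mathbf{x}}\cdot\mathbf{y}}\,\hat{\mathbf{x}}^\perp\cdot\mathbf{F}(\mathbf{y})\,d\mathbf{y}$. *)

theory Defs
  imports "HOL-Analysis.Analysis"
begin

definition unit_circle :: "(real^2) set" where
  "unit_circle = {x. norm x = 1}"

definition perp :: "real^2 \<Rightarrow> real^2" where
  "perp x = (\<chi> i. if i = 1 then - (x $ 2) else x $ 1)"

text \<open>Real direction dotted with a complex vector (bilinear, no conjugation).\<close>
definition cdot :: "real^2 \<Rightarrow> complex^2 \<Rightarrow> complex" where
  "cdot d v = complex_of_real (d $ 1) * v $ 1 + complex_of_real (d $ 2) * v $ 2"

definition kp :: "real \<Rightarrow> real \<Rightarrow> real \<Rightarrow> real" where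
  "kp lam mu \<omega> = \<omega> / sqrt (lam + 2 * mu)"

definition ks :: "real \<Rightarrow> real \<Rightarrow> real" where
  "ks mu \<omega> = \<omega> / sqrt mu"

definition farfield_p :: "real \<Rightarrow> real \<Rightarrow> (real^2 \<Rightarrow> complex^2) \<Rightarrow> real^2 \<Rightarrow> real \<Rightarrow> complex" where
  "farfield_p lam mu F x \<omega> =
     (LINT y|lborel. exp (- \<i> * complex_of_real (kp lam mu \<omega> * (x \<bullet> y))) * cdot x (F y))"

definition farfield_s :: "real \<Rightarrow> real \<Rightarrow> (real^2 \<Rightarrow> complex^2) \<Rightarrow> real^2 \<Rightarrow> real \<Rightarrow> complex" where
  "farfield_s lam mu F x \<omega> =
     (LINT y|lborel. exp (- \<i> * complex_of_real (ks mu \<omega> * (x \<bullet> y))) * cdot (perp x) (F y))"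

definition L2_compact_source :: "(real^2 \<Rightarrow> complex^2) \<Rightarrow> bool" where
  "L2_compact_source F \<longleftrightarrow>
     F \<in> borel_measurable lborel \<and>
     integrable lborel (\<lambda>y. (norm (F y))^2) \<and>
     (\<exists>R. AE y in lborel. R < norm y \<longrightarrow> F y = 0)"

end

theory Submission
  imports Defs "HOL-Complex_Analysis.Complex_Analysis"
begin


lemma integrable_bdd_mult:
  fixes g :: "'a::euclidean_space \<Rightarrow> complex"
  assumes "integrable lborel g" "h \<in> borel_measurable borel"
    and "\<And>y. g y \<noteq> 0 \<Longrightarrow> norm (h y) \<le> B"
  shows "integrable lborel (\<lambda>y. h y * g y)"
proof (rule Bochner_Integration.integrable_bound[where f="\<lambda>y. B * norm (g y)"])
  show "integrable lborel (\<lambda>y. B * norm (g y))" using assms(1) by auto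
  show "(\<lambda>y. h y * g y) \<in> borel_measurable lborel" using assms(1,2) by auto
  show "AE y in lborel. norm (h y * g y) \<le> norm (B * norm (g y))"
  proof (intro AE_I2)
    fix y show "norm (h y * g y) \<le> norm (B * norm (g y))"
    proof (cases "g y = 0")
      case False
      then have "norm (h y) \<le> B" using assms(3) by auto
      then have "norm (h y) * norm (g y) \<le> B * norm (g y)" by (simp add: mult_right_mono)
      moreover have "0 \<le> B" using \<open>norm (h y) \<le> B\<close> norm_ge_zero order_trans by blast
      ultimately show ?thesis by (simp add: norm_mult)
    qed simp
  qed
qed

lemma fourier_powser:
  fixes g :: "'a::euclidean_space \<Rightarrow> complex"
  assumes int: "integrable lborel g"
    and supp: "\<And>y. R < norm y \<Longrightarrow> g y = 0" and R0: "0 \<le> R"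
  shows "(\<lambda>n. (LINT y|lborel. ((- \<i> * complex_of_real (x \<bullet> y)) ^ n / fact n) * g y) * w ^ n)
           sums (LINT y|lborel. exp (- \<i> * w * complex_of_real (x \<bullet> y)) * g y)"
proof -
  have gm[measurable]: "g \<in> borel_measurable borel" using int by auto
  define K where "K = norm w * norm x * R"
  have K0: "0 \<le> K" using R0 by (simp add: K_def)
  define f where "f = (\<lambda>n y. ((- \<i> * w * complex_of_real (x \<bullet> y)) ^ n / fact n) * g y)"
  have fb: "norm ((- \<i> * w * complex_of_real (x \<bullet> y)) ^ n / fact n) \<le> K ^ n / fact n"
    if "g y \<noteq> 0" for y n
  proof -
    have "norm y \<le> R" using supp that by force
    have "\<bar>x \<bullet> y\<bar> \<le> norm x * norm y" by (rule Cauchy_Schwarz_ineq2)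
    also have "\<dots> \<le> norm x * R" using \<open>norm y \<le> R\<close> by (simp add: mult_left_mono)
    finally have "norm (- \<i> * w * complex_of_real (x \<bullet> y)) \<le> K"
      by (simp add: K_def norm_mult mult_left_mono mult.assoc)
    then have "norm (- \<i> * w * complex_of_real (x \<bullet> y)) ^ n \<le> K ^ n"
      by (simp add: power_mono)
    then show ?thesis by (simp add: norm_divide norm_power divide_right_mono)
  qed
  have fm: "(\<lambda>y. (- \<i> * w * complex_of_real (x \<bullet> y)) ^ n / fact n) \<in> borel_measurable borel" for n
    by measurable
  have fi: "integrable lborel (f n)" for n
    unfolding f_def by (rule integrable_bdd_mult[OF int fm fb])
  have fin: "(LINT y|lborel. norm (f n y)) \<le> K ^ n / fact n * (LINT y|lborel. norm (g y))" for n
  proof -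
    have "(LINT y|lborel. norm (f n y)) \<le> (LINT y|lborel. K ^ n / fact n * norm (g y))"
    proof (rule integral_mono)
      show "integrable lborel (\<lambda>y. norm (f n y))" using fi by auto
      show "integrable lborel (\<lambda>y. K ^ n / fact n * norm (g y))" using int by auto
      fix y show "norm (f n y) \<le> K ^ n / fact n * norm (g y)"
      proof (cases "g y = 0")
        case False
        show ?thesis unfolding f_def norm_mult
          by (rule mult_right_mono[OF fb[OF False]]) simp
      qed (simp add: f_def)
    qed
    then show ?thesis by simp
  qed
  have summ: "summable (\<lambda>n. LINT y|lborel. norm (f n y))"
  proof (rule summable_comparison_test'[where g="\<lambda>n. K ^ n / fact n * (LINT y|lborel. norm (g y))"])
    show "summable (\<lambda>n. K ^ n / fact n * (LINT y|lborel. norm (g y)))"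
      using summable_exp[of K] by (intro summable_mult2) (simp add: divide_inverse mult.commute)
    show "norm (LINT y|lborel. norm (f n y)) \<le> K ^ n / fact n * (LINT y|lborel. norm (g y))" for n
      using fin[of n] by simp
  qed
  have pt: "(\<Sum>n. f n y) = exp (- \<i> * w * complex_of_real (x \<bullet> y)) * g y" for y
  proof -
    have "(\<lambda>n. (- \<i> * w * complex_of_real (x \<bullet> y)) ^ n /\<^sub>R fact n) sums exp (- \<i> * w * complex_of_real (x \<bullet> y))"
      by (rule exp_converges)
    then have "(\<lambda>n. ((- \<i> * w * complex_of_real (x \<bullet> y)) ^ n /\<^sub>R fact n) * g y) sums (exp (- \<i> * w * complex_of_real (x \<bullet> y)) * g y)"
      by (rule sums_mult2)
    then show ?thesis unfolding f_def by (simp add: scaleR_conv_of_real divide_inverse sums_iff mult.commute)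
  qed
  have "(\<lambda>n. integral\<^sup>L lborel (f n)) sums (LINT y|lborel. (\<Sum>n. f n y))"
  proof (rule sums_integral[OF fi _ summ], intro AE_I2)
    fix y
    define z where "z = - \<i> * w * complex_of_real (x \<bullet> y)"
    have "norm (f n y) = inverse (fact n) * norm z ^ n * norm (g y)" for n
      by (simp add: f_def z_def norm_mult norm_divide norm_power norm_fact field_simps)
    then show "summable (\<lambda>n. norm (f n y))"
      using summable_mult2[OF summable_exp[of "norm z"], of "norm (g y)"] by simp
  qed
  moreover have "integral\<^sup>L lborel (f n) = (LINT y|lborel. ((- \<i> * complex_of_real (x \<bullet> y)) ^ n / fact n) * g y) * w ^ n" for n
  proof -
    have "integral\<^sup>L lborel (f n) = (LINT y|lborel. w ^ n * (((- \<i> * complex_of_real (x \<bullet> y)) ^ n / fact n) * g y))"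
    proof (rule Bochner_Integration.integral_cong[OF refl])
      fix y
      have "- \<i> * w * complex_of_real (x \<bullet> y) = w * (- \<i> * complex_of_real (x \<bullet> y))" by simp
      then have "(- \<i> * w * complex_of_real (x \<bullet> y)) ^ n = w ^ n * (- \<i> * complex_of_real (x \<bullet> y)) ^ n"
        by (simp only: power_mult_distrib)
      then show "f n y = w ^ n * (((- \<i> * complex_of_real (x \<bullet> y)) ^ n / fact n) * g y)"
        unfolding f_def by simp
    qed
    then show ?thesis by (simp add: mult.commute)
  qed
  ultimately show ?thesis using pt by simp
qed

lemma fourier_line_zero:
  fixes g :: "'a::euclidean_space \<Rightarrow> complex"
  assumes int: "integrable lborel g"
    and supp: "\<And>y. R < norm y \<Longrightarrow> g y = 0" and R0: "0 \<le> R"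
    and ab: "a < b"
    and zero: "\<And>t. a < t \<Longrightarrow> t < b \<Longrightarrow> (LINT y|lborel. exp (- \<i> * complex_of_real (t * (x \<bullet> y))) * g y) = 0"
  shows "(LINT y|lborel. exp (- \<i> * complex_of_real (t * (x \<bullet> y))) * g y) = 0"
proof -
  define \<Phi> where "\<Phi> = (\<lambda>w. LINT y|lborel. exp (- \<i> * w * complex_of_real (x \<bullet> y)) * g y)"
  define r where "r = \<bar>t\<bar> + \<bar>a\<bar> + \<bar>b\<bar> + 1"
  have hol: "\<Phi> holomorphic_on ball 0 r"
    by (rule power_series_holomorphic[where a="\<lambda>n. LINT y|lborel. ((- \<i> * complex_of_real (x \<bullet> y)) ^ n / fact n) * g y"])
       (use fourier_powser[OF int supp R0] in \<open>simp add: \<Phi>_def\<close>)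
  define \<xi> where "\<xi> = complex_of_real ((a + b) / 2)"
  have "\<Phi> (complex_of_real t) = 0"
  proof (rule analytic_continuation[OF hol open_ball connected_ball, where U="complex_of_real ` {a<..<b}" and \<xi>=\<xi>])
    show "complex_of_real ` {a<..<b} \<subseteq> ball 0 r"
      by (auto simp: r_def)
    have "\<bar>(a + b) / 2\<bar> = \<bar>a + b\<bar> / 2" by simp
    then show "\<xi> \<in> ball 0 r" unfolding \<xi>_def mem_ball dist_0_norm norm_of_real r_def
      using abs_triangle_ineq[of a b] abs_ge_zero[of t] abs_ge_zero[of a] abs_ge_zero[of b] by linarith
    show "complex_of_real t \<in> ball 0 r" by (auto simp: r_def)
    show "\<Phi> z = 0" if "z \<in> complex_of_real ` {a<..<b}" for z
    proof -
      from that obtain s where s: "a < s" "s < b" "z = complex_of_real s" by auto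
      show ?thesis using zero[OF s(1,2)] unfolding s(3) \<Phi>_def by (simp add: mult.assoc)
    qed
    show "\<xi> islimpt complex_of_real ` {a<..<b}"
    proof (rule islimpt_approachable[THEN iffD2], intro allI impI)
      fix e :: real assume e: "0 < e"
      define d where "d = min e ((b - a) / 2) / 2"
      have m1: "min e ((b - a) / 2) \<le> e" by (rule min.cobounded1)
      have m2: "min e ((b - a) / 2) \<le> (b - a) / 2" by (rule min.cobounded2)
      have m3: "0 < min e ((b - a) / 2)" using e ab by simp
      have d: "0 < d" "d < e" "d < (b - a) / 2" unfolding d_def using m1 m2 m3 by linarith+
      show "\<exists>x'\<in>complex_of_real ` {a<..<b}. x' \<noteq> \<xi> \<and> dist x' \<xi> < e"
      proof (rule bexI[of _ "complex_of_real ((a + b) / 2 + d)"])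
        have "(a + b) / 2 + d \<in> {a<..<b}" using d ab by (auto simp: field_simps)
        then show "complex_of_real ((a + b) / 2 + d) \<in> complex_of_real ` {a<..<b}" by (rule imageI)
        have "(a + b) / 2 + d \<noteq> (a + b) / 2" using d(1) by linarith
        then have "complex_of_real ((a + b) / 2 + d) \<noteq> \<xi>" unfolding \<xi>_def of_real_eq_iff .
        moreover have "dist (complex_of_real ((a + b) / 2 + d)) \<xi> = dist ((a + b) / 2 + d) ((a + b) / 2)"
          unfolding \<xi>_def by (rule dist_of_real)
        ultimately show "complex_of_real ((a + b) / 2 + d) \<noteq> \<xi> \<and> dist (complex_of_real ((a + b) / 2 + d)) \<xi> < e"
          using d by (simp add: dist_real_def)
      qed
    qed
  qed
  then show ?thesis by (simp add: \<Phi>_def mult.assoc)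
qed



definition tp :: "(complex \<times> 'a::real_inner) list \<Rightarrow> 'a \<Rightarrow> complex" where
  "tp L y = sum_list (map (\<lambda>(c,\<xi>). c * exp (\<i> * complex_of_real (\<xi> \<bullet> y))) L)"

definition tmul :: "(complex \<times> 'a::real_inner) list \<Rightarrow> (complex \<times> 'a) list \<Rightarrow> (complex \<times> 'a) list" where
  "tmul L M = concat (map (\<lambda>(c,\<xi>). map (\<lambda>(d,\<eta>). (c*d, \<xi>+\<eta>)) M) L)"

definition tcnj :: "(complex \<times> 'a::real_inner) list \<Rightarrow> (complex \<times> 'a) list" where
  "tcnj L = map (\<lambda>(c,\<xi>). (cnj c, -\<xi>)) L"

definition tscale :: "complex \<Rightarrow> (complex \<times> 'a::real_inner) list \<Rightarrow> (complex \<times> 'a) list" where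
  "tscale a L = map (\<lambda>(c,\<xi>). (a*c, \<xi>)) L"

lemma tp_Nil[simp]: "tp [] y = 0" by (simp add: tp_def)
lemma tp_Cons[simp]: "tp ((c,\<xi>) # L) y = c * exp (\<i> * complex_of_real (\<xi> \<bullet> y)) + tp L y"
  by (simp add: tp_def)
lemma tp_append[simp]: "tp (L @ M) y = tp L y + tp M y" by (simp add: tp_def)

lemma tp_map_mult: "tp (map (\<lambda>(d,\<eta>). (c*d, \<xi>+\<eta>)) M) y = c * exp (\<i> * complex_of_real (\<xi> \<bullet> y)) * tp M y"
  by (induction M) (auto simp: algebra_simps inner_add_left exp_add)

lemma tp_tmul: "tp (tmul L M) y = tp L y * tp M y"
  by (induction L) (auto simp: tmul_def tp_map_mult algebra_simps)

lemma tp_tcnj: "tp (tcnj L) y = cnj (tp L y)"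
  by (induction L) (auto simp: tcnj_def exp_cnj)

lemma tp_tscale: "tp (tscale a L) y = a * tp L y"
  by (induction L) (auto simp: tscale_def algebra_simps)

lemma tp_cont: "continuous_on UNIV (tp L)"
proof (induction L)
  case Nil then show ?case by (simp add: tp_def)
next
  case (Cons a L)
  obtain c \<xi> where a: "a = (c, \<xi>)" by force
  have "continuous_on UNIV (\<lambda>y. c * exp (\<i> * complex_of_real (\<xi> \<bullet> y)) + tp L y)"
    using Cons by (intro continuous_intros) auto
  then show ?case by (simp add: a)
qed

lemma tp_bound: "norm (tp L y) \<le> sum_list (map (\<lambda>(c,\<xi>). norm c) L)"
proof (induction L)
  case Nil then show ?case by simp
next
  case (Cons a L)
  obtain c \<xi> where a: "a = (c, \<xi>)" by force
  have "norm (exp (\<i> * complex_of_real (\<xi> \<bullet> y))) = 1"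
    by (simp add: norm_exp_i_times)
  then have "norm (c * exp (\<i> * complex_of_real (\<xi> \<bullet> y))) = norm c" by (simp add: norm_mult)
  then show ?case using Cons a norm_triangle_ineq[of "c * exp (\<i> * complex_of_real (\<xi> \<bullet> y))" "tp L y"]
    by simp
qed

lemma tp_meas: "tp L \<in> borel_measurable borel"
  using tp_cont by (rule borel_measurable_continuous_onI)

lemma tp_int_zero:
  fixes g :: "'a::euclidean_space \<Rightarrow> complex"
  assumes int: "integrable lborel g"
    and ft: "\<And>\<xi>. (LINT y|lborel. exp (- \<i> * complex_of_real (\<xi> \<bullet> y)) * g y) = 0"
  shows "(LINT y|lborel. tp L y * g y) = 0"
proof (induction L)
  case Nil then show ?case by simp
next
  case (Cons a L)
  obtain c \<xi> where a: "a = (c, \<xi>)" by force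
  have i1: "integrable lborel (\<lambda>y. c * (exp (- \<i> * complex_of_real ((-\<xi>) \<bullet> y)) * g y))"
    by (intro integrable_mult_right integrable_bdd_mult[OF int, where B=1]) (auto simp: norm_exp_i_times)
  have i2: "integrable lborel (\<lambda>y. tp L y * g y)"
    by (rule integrable_bdd_mult[OF int tp_meas tp_bound])
  have "(LINT y|lborel. tp (a#L) y * g y) = (LINT y|lborel. c * (exp (- \<i> * complex_of_real ((-\<xi>) \<bullet> y)) * g y) + tp L y * g y)"
    by (rule Bochner_Integration.integral_cong) (auto simp: a algebra_simps)
  also have "\<dots> = c * (LINT y|lborel. exp (- \<i> * complex_of_real ((-\<xi>) \<bullet> y)) * g y) + (LINT y|lborel. tp L y * g y)"
    using i1 i2 by simp
  also have "\<dots> = 0" using ft[of "-\<xi>"] Cons by (simp del: inner_minus_left)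
  finally show ?case .
qed

lemma re_tp_int_zero:
  fixes g :: "'a::euclidean_space \<Rightarrow> complex"
  assumes int: "integrable lborel g"
    and ft: "\<And>\<xi>. (LINT y|lborel. exp (- \<i> * complex_of_real (\<xi> \<bullet> y)) * g y) = 0"
  shows "(LINT y|lborel. complex_of_real (Re (tp L y)) * g y) = 0"
proof -
  have "complex_of_real (Re (tp L y)) = tp (tscale (1/2) (L @ tcnj L)) y" for y
    using complex_add_cnj[of "tp L y"] by (simp add: tp_tscale tp_tcnj)
  then show ?thesis using tp_int_zero[OF int ft] by simp
qed

lemma cont_int_zero:
  fixes g :: "'a::euclidean_space \<Rightarrow> complex"
  assumes int: "integrable lborel g"
    and supp: "\<And>y. R < norm y \<Longrightarrow> g y = 0"
    and ft: "\<And>\<xi>. (LINT y|lborel. exp (- \<i> * complex_of_real (\<xi> \<bullet> y)) * g y) = 0"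
    and fc: "continuous_on UNIV f"
  shows "(LINT y|lborel. complex_of_real (f y) * g y) = 0"
proof -
  define S where "S = cball (0::'a) R"
  have cS: "compact S" by (simp add: S_def)
  have fm[measurable]: "f \<in> borel_measurable borel" using fc by (rule borel_measurable_continuous_onI)
  have gS: "y \<in> S" if "g y \<noteq> 0" for y using supp that by (force simp: S_def)
  define P where "P = (\<lambda>h::'a \<Rightarrow> real. \<exists>L. h = (\<lambda>y. Re (tp L y)))"
  have approx: "\<exists>h. P h \<and> (\<forall>x\<in>S. \<bar>f x - h x\<bar> < e)" if e: "0 < e" for e
  proof (rule Stone_Weierstrass_HOL[OF cS])
    show "P (\<lambda>x. c)" for c
      unfolding P_def by (rule exI[of _ "[(complex_of_real c, 0)]"]) simp
    show "continuous_on S h" if "P h" for h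
    proof -
      from that obtain L where h: "h = (\<lambda>y. Re (tp L y))" by (auto simp: P_def)
      have "continuous_on UNIV (\<lambda>y. Re (tp L y))" using tp_cont by (intro continuous_intros)
      then show ?thesis unfolding h by (rule continuous_on_subset) auto
    qed
    show "P (\<lambda>x. h1 x + h2 x)" if "P h1 \<and> P h2" for h1 h2
    proof -
      from that obtain L M where "h1 = (\<lambda>y. Re (tp L y))" "h2 = (\<lambda>y. Re (tp M y))" by (auto simp: P_def)
      then show ?thesis unfolding P_def by (intro exI[of _ "L @ M"]) auto
    qed
    show "P (\<lambda>x. h1 x * h2 x)" if "P h1 \<and> P h2" for h1 h2
    proof -
      from that obtain L M where h: "h1 = (\<lambda>y. Re (tp L y))" "h2 = (\<lambda>y. Re (tp M y))" by (auto simp: P_def)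
      have "Re (tp L y) * Re (tp M y) = Re (tp (tscale (1/2) (tmul L M @ tmul L (tcnj M))) y)" for y
        by (simp add: tp_tscale tp_tmul tp_tcnj algebra_simps add_divide_distrib[symmetric])
      then show ?thesis unfolding P_def h by (intro exI[of _ "tscale (1/2) (tmul L M @ tmul L (tcnj M))"]) auto
    qed
    show "\<exists>h. P h \<and> h x \<noteq> h y" if "x \<in> S \<and> y \<in> S \<and> x \<noteq> y" for x y
    proof (rule ccontr)
      assume H: "\<not> (\<exists>h. P h \<and> h x \<noteq> h y)"
      define \<xi> where "\<xi> = (pi / 2 / (norm (x - y))\<^sup>2) *\<^sub>R (x - y)"
      have nz: "norm (x - y) \<noteq> 0" using that by auto
      have d: "\<xi> \<bullet> x - \<xi> \<bullet> y = pi / 2"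
      proof -
        have "\<xi> \<bullet> x - \<xi> \<bullet> y = \<xi> \<bullet> (x - y)" by (simp add: inner_diff_right)
        also have "\<dots> = pi / 2 / (norm (x - y))\<^sup>2 * ((x - y) \<bullet> (x - y))" by (simp add: \<xi>_def)
        also have "\<dots> = pi / 2" using nz by (simp add: power2_norm_eq_inner[symmetric])
        finally show ?thesis .
      qed
      have "P (\<lambda>y. Re (tp [(1, \<xi>)] y))" "P (\<lambda>y. Re (tp [(-\<i>, \<xi>)] y))" unfolding P_def by blast+
      with H have "Re (tp [(1, \<xi>)] x) = Re (tp [(1, \<xi>)] y)" "Re (tp [(-\<i>, \<xi>)] x) = Re (tp [(-\<i>, \<xi>)] y)"
        by blast+
      then have c: "cos (\<xi> \<bullet> x) = cos (\<xi> \<bullet> y)" and s: "sin (\<xi> \<bullet> x) = sin (\<xi> \<bullet> y)"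
        by (simp_all add: Re_exp Im_exp)
      have "cos (\<xi> \<bullet> x - \<xi> \<bullet> y) = 1"
        by (simp add: cos_diff c[symmetric] s[symmetric] power2_eq_square[symmetric])
      then show False using d by simp
    qed
  qed (use fc e in \<open>auto intro: continuous_on_subset\<close>)
  have "bounded (f ` S)" using compact_continuous_image[OF continuous_on_subset[OF fc] cS]
    by (auto intro: compact_imp_bounded)
  then obtain B where B: "\<And>y. y \<in> S \<Longrightarrow> norm (f y) \<le> B" by (auto simp: bounded_iff)
  have fgint: "integrable lborel (\<lambda>y. complex_of_real (f y) * g y)"
    by (rule integrable_bdd_mult[OF int, where B=B]) (use B gS in auto)
  define I where "I = (LINT y|lborel. complex_of_real (f y) * g y)"
  define C where "C = (LINT y|lborel. norm (g y))"
  have C0: "0 \<le> C" unfolding C_def by simp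
  have bnd: "norm I \<le> e * C" if e: "0 < e" for e
  proof -
    obtain h where "P h" and h: "\<And>x. x \<in> S \<Longrightarrow> \<bar>f x - h x\<bar> < e" using approx[OF e] by blast
    then obtain L where hL: "h = (\<lambda>y. Re (tp L y))" by (auto simp: P_def)
    have hm: "(\<lambda>y. complex_of_real (Re (tp L y))) \<in> borel_measurable borel"
      by (rule borel_measurable_continuous_onI) (intro continuous_intros tp_cont)
    have hint: "integrable lborel (\<lambda>y. complex_of_real (h y) * g y)" unfolding hL
      by (rule integrable_bdd_mult[OF int hm, where B="sum_list (map (\<lambda>(c,\<xi>). norm c) L)"])
        (auto intro: order_trans[OF abs_Re_le_cmod tp_bound])
    have h0: "(LINT y|lborel. complex_of_real (h y) * g y) = 0" unfolding hL by (rule re_tp_int_zero[OF int ft])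
    have "I = (LINT y|lborel. complex_of_real (f y) * g y - complex_of_real (h y) * g y)"
      using fgint hint h0 by (simp add: I_def)
    also have "norm \<dots> \<le> (LINT y|lborel. e * norm (g y))"
    proof (rule Bochner_Integration.integral_norm_bound_integral)
      show "integrable lborel (\<lambda>y. complex_of_real (f y) * g y - complex_of_real (h y) * g y)"
        using fgint hint by auto
      show "integrable lborel (\<lambda>y. e * norm (g y))" using int by auto
      fix y
      show "norm (complex_of_real (f y) * g y - complex_of_real (h y) * g y) \<le> e * norm (g y)"
      proof (cases "g y = 0")
        case False
        then have "\<bar>f y - h y\<bar> < e" using h gS by auto
        have "complex_of_real (f y) * g y - complex_of_real (h y) * g y = complex_of_real (f y - h y) * g y"
          by (simp add: algebra_simps)
        then have "norm (complex_of_real (f y) * g y - complex_of_real (h y) * g y) = \<bar>f y - h y\<bar> * norm (g y)"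
          by (simp only: norm_mult norm_of_real)
        also have "\<dots> \<le> e * norm (g y)" using \<open>\<bar>f y - h y\<bar> < e\<close> by (simp add: mult_right_mono)
        finally show ?thesis .
      qed simp
    qed
    also have "\<dots> = e * C" by (simp add: C_def)
    finally show ?thesis .
  qed
  have "norm I = 0"
  proof (rule ccontr)
    assume "norm I \<noteq> 0"
    then have pos: "0 < norm I" by simp
    have "norm I \<le> (norm I / (2 * (C + 1))) * C" using bnd[of "norm I / (2 * (C + 1))"] pos C0 by simp
    also have "\<dots> < norm I" using pos C0 by (simp add: field_simps add_nonneg_pos)
    finally show False by simp
  qed
  then show ?thesis by (simp add: I_def)
qed



lemma box_integral_zero_from_continuous:
  fixes u :: "'a::euclidean_space \<Rightarrow> real"
  assumes int: "integrable lborel u"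
    and cont0: "\<And>f. continuous_on UNIV f \<Longrightarrow> (\<forall>y. \<bar>f y\<bar> \<le> 1) \<Longrightarrow> (LINT y|lborel. f y * u y) = 0"
  shows "(LINT y|lborel. indicator (box a b) y * u y) = 0"
proof -
  have um[measurable]: "u \<in> borel_measurable borel" using int by auto
  define C where "C = - box a b"
  have Cc: "closed C" unfolding C_def by (simp add: open_box closed_Compl)
  have Cne: "C \<noteq> {}"
  proof
    assume "C = {}"
    then have "box a b = UNIV" unfolding C_def by (metis double_complement Compl_empty_eq)
    then show False using bounded_box[of a b] not_bounded_UNIV by metis
  qed
  define s where "s = (\<lambda>(n::nat) y. min 1 (real n * infdist y C))"
  have sc: "continuous_on UNIV (s n)" for n
    unfolding s_def by (intro continuous_intros continuous_on_infdist)
  have sb: "\<bar>s n y\<bar> \<le> 1" for n y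
    unfolding s_def using infdist_nonneg[of y C] by auto
  have [measurable]: "s n \<in> borel_measurable borel" for n
    using sc by (simp add: borel_measurable_continuous_onI)
  have lim: "(\<lambda>n. s n y * u y) \<longlonglongrightarrow> indicator (box a b) y * u y" for y
  proof (cases "y \<in> box a b")
    case True
    then have "y \<notin> C" unfolding C_def by auto
    then have d: "0 < infdist y C" using infdist_pos_not_in_closed[OF Cc Cne] by auto
    obtain N :: nat where N: "1 / infdist y C < real N" using reals_Archimedean2 by blast
    have "eventually (\<lambda>n. s n y * u y = indicator (box a b) y * u y) sequentially"
    proof (rule eventually_sequentiallyI[of N])
      fix n assume "N \<le> n"
      then have "1 / infdist y C < real n" using N by (meson less_le_trans of_nat_le_iff)
      then have "1 \<le> real n * infdist y C" using d by (simp add: field_simps)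
      then show "s n y * u y = indicator (box a b) y * u y" using True by (simp add: s_def)
    qed
    then show ?thesis by (rule tendsto_eventually)
  next
    case False
    then have "y \<in> C" unfolding C_def by auto
    then have "s n y = 0" for n by (simp add: s_def infdist_zero)
    then show ?thesis using False by simp
  qed
  have "(\<lambda>n. LINT y|lborel. s n y * u y) \<longlonglongrightarrow> (LINT y|lborel. indicator (box a b) y * u y)"
  proof (rule integral_dominated_convergence[where w="\<lambda>y. norm (u y)"])
    show "integrable lborel (\<lambda>y. norm (u y))" using int by auto
    show "AE y in lborel. (\<lambda>n. s n y * u y) \<longlonglongrightarrow> indicator (box a b) y * u y"
      using lim by auto
    show "\<And>n. AE y in lborel. norm (s n y * u y) \<le> norm (u y)"
      using sb by (auto simp: abs_mult intro!: mult_left_le_one_le)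
  qed auto
  moreover have "(LINT y|lborel. s n y * u y) = 0" for n
    by (rule cont0[OF sc]) (simp add: sb)
  ultimately have "(\<lambda>n. 0::real) \<longlonglongrightarrow> (LINT y|lborel. indicator (box a b) y * u y)"
    by simp
  then show ?thesis
    using LIMSEQ_unique[OF _ tendsto_const] by metis
qed



lemma ae_zero_if_box_integrals:
  fixes u :: "'a::euclidean_space \<Rightarrow> real"
  assumes int: "integrable lborel u"
    and box0: "\<And>a b. (LINT y|lborel. indicator (box a b) y * u y) = 0"
  shows "AE y in lborel. u y = 0"
proof -
  have um[measurable]: "u \<in> borel_measurable borel" using int by auto
  define P where "P = (\<lambda>y. ennreal (max 0 (u y)))"
  define N where "N = (\<lambda>y. ennreal (max 0 (- u y)))"
  have Pm[measurable]: "P \<in> borel_measurable borel" unfolding P_def by measurable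
  have Nm[measurable]: "N \<in> borel_measurable borel" unfolding N_def by measurable
  have ip: "integrable lborel (\<lambda>y. indicator A y * max 0 (u y))" if [measurable]: "A \<in> sets borel" for A
    by (rule Bochner_Integration.integrable_bound[OF integrable_norm[OF int]]) (auto simp: indicator_def)
  have in': "integrable lborel (\<lambda>y. indicator A y * max 0 (- u y))" if [measurable]: "A \<in> sets borel" for A
    by (rule Bochner_Integration.integrable_bound[OF integrable_norm[OF int]]) (auto simp: indicator_def)
  have eP: "emeasure (density lborel P) A = ennreal (LINT y|lborel. indicator A y * max 0 (u y))"
    if [measurable]: "A \<in> sets borel" for A
  proof -
    have "emeasure (density lborel P) A = (\<integral>\<^sup>+ y. ennreal (indicator A y * max 0 (u y)) \<partial>lborel)"
      by (simp add: emeasure_density P_def indicator_mult_ennreal mult.commute)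
    also have "\<dots> = ennreal (LINT y|lborel. indicator A y * max 0 (u y))"
      by (rule nn_integral_eq_integral[OF ip[OF that]]) (auto simp: indicator_def)
    finally show ?thesis .
  qed
  have eN: "emeasure (density lborel N) A = ennreal (LINT y|lborel. indicator A y * max 0 (- u y))"
    if [measurable]: "A \<in> sets borel" for A
  proof -
    have "emeasure (density lborel N) A = (\<integral>\<^sup>+ y. ennreal (indicator A y * max 0 (- u y)) \<partial>lborel)"
      by (simp add: emeasure_density N_def indicator_mult_ennreal mult.commute)
    also have "\<dots> = ennreal (LINT y|lborel. indicator A y * max 0 (- u y))"
      by (rule nn_integral_eq_integral[OF in'[OF that]]) (auto simp: indicator_def)
    finally show ?thesis .
  qed
  have "density lborel P = density lborel N"
  proof (rule measure_eqI_generator_eq[where E="range (\<lambda>(a, b). box a b)" and \<Omega>=UNIV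
        and A="\<lambda>n::nat. box (- (real n *\<^sub>R One)) (real n *\<^sub>R One)"])
    show "Int_stable (range (\<lambda>(a, b). box a b::'a set))"
      by (auto simp: Int_stable_def box_Int_box)
    show "range (\<lambda>(a, b). box a b) \<subseteq> Pow (UNIV::'a set)" by auto
    show "sets (density lborel P) = sigma_sets UNIV (range (\<lambda>(a, b). box a b))"
      by (simp add: borel_eq_box)
    show "sets (density lborel N) = sigma_sets UNIV (range (\<lambda>(a, b). box a b))"
      by (simp add: borel_eq_box)
    show "range (\<lambda>n::nat. box (- (real n *\<^sub>R One)) (real n *\<^sub>R One)) \<subseteq> range (\<lambda>(a, b). box a b::'a set)"
      by auto
    show "(\<Union>n. box (- (real n *\<^sub>R One)) (real n *\<^sub>R One)) = (UNIV::'a set)"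
      by (rule UN_box_eq_UNIV)
    show "emeasure (density lborel P) (box (- (real n *\<^sub>R One)) (real n *\<^sub>R One)) \<noteq> \<infinity>" for n
      by (subst eP) auto
    fix X assume "X \<in> range (\<lambda>(a, b). box a b::'a set)"
    then obtain a b where X: "X = box a b" by auto
    have "(LINT y|lborel. indicator X y * max 0 (u y)) - (LINT y|lborel. indicator X y * max 0 (- u y))
        = (LINT y|lborel. indicator X y * max 0 (u y) - indicator X y * max 0 (- u y))"
      using ip in' X by (simp add: Bochner_Integration.integral_diff)
    also have "\<dots> = (LINT y|lborel. indicator X y * u y)"
      by (rule Bochner_Integration.integral_cong) (auto simp: indicator_def)
    also have "\<dots> = 0" using box0 X by simp
    finally show "emeasure (density lborel P) X = emeasure (density lborel N) X"
      using X by (simp add: eP eN)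
  qed
  then have "AE y in lborel. P y = N y"
    by (intro sigma_finite_measure.density_unique[OF sigma_finite_lborel]) auto
  then show ?thesis
    by eventually_elim (auto simp: P_def N_def max_def split: if_splits)
qed


lemma fourier_unique:
  fixes g :: "'a::euclidean_space \<Rightarrow> complex"
  assumes int: "integrable lborel g"
    and supp: "\<And>y. R < norm y \<Longrightarrow> g y = 0"
    and ft: "\<And>\<xi>. (LINT y|lborel. exp (- \<i> * complex_of_real (\<xi> \<bullet> y)) * g y) = 0"
  shows "AE y in lborel. g y = 0"
proof -
  have gm[measurable]: "g \<in> borel_measurable borel" using int by auto
  have fi: "integrable lborel (\<lambda>y. complex_of_real (f y) * g y)"
    if "continuous_on UNIV f" "\<forall>y. \<bar>f y\<bar> \<le> 1" for f
    by (rule integrable_bdd_mult[OF int, where B=1]) (use that in \<open>auto intro: borel_measurable_continuous_onI continuous_intros\<close>)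
  have re: "AE y in lborel. Re (g y) = 0"
  proof (rule ae_zero_if_box_integrals)
    show "integrable lborel (\<lambda>y. Re (g y))" using int by auto
    show "(LINT y|lborel. indicator (box a b) y * Re (g y)) = 0" for a b
    proof (rule box_integral_zero_from_continuous)
      show "integrable lborel (\<lambda>y. Re (g y))" using int by auto
      fix f :: "'a \<Rightarrow> real" assume fc: "continuous_on UNIV f" and fb: "\<forall>y. \<bar>f y\<bar> \<le> 1"
      have "(LINT y|lborel. f y * Re (g y)) = (LINT y|lborel. Re (complex_of_real (f y) * g y))" by simp
      also have "\<dots> = Re (LINT y|lborel. complex_of_real (f y) * g y)"
        by (rule integral_Re[OF fi[OF fc fb]])
      also have "\<dots> = 0" using cont_int_zero[OF int supp ft fc] by simp
      finally show "(LINT y|lborel. f y * Re (g y)) = 0" .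
    qed
  qed
  have im: "AE y in lborel. Im (g y) = 0"
  proof (rule ae_zero_if_box_integrals)
    show "integrable lborel (\<lambda>y. Im (g y))" using int by auto
    show "(LINT y|lborel. indicator (box a b) y * Im (g y)) = 0" for a b
    proof (rule box_integral_zero_from_continuous)
      show "integrable lborel (\<lambda>y. Im (g y))" using int by auto
      fix f :: "'a \<Rightarrow> real" assume fc: "continuous_on UNIV f" and fb: "\<forall>y. \<bar>f y\<bar> \<le> 1"
      have "(LINT y|lborel. f y * Im (g y)) = (LINT y|lborel. Im (complex_of_real (f y) * g y))" by simp
      also have "\<dots> = Im (LINT y|lborel. complex_of_real (f y) * g y)"
        by (rule integral_Im[OF fi[OF fc fb]])
      also have "\<dots> = 0" using cont_int_zero[OF int supp ft fc] by simp
      finally show "(LINT y|lborel. f y * Im (g y)) = 0" .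
    qed
  qed
  from re im show ?thesis by eventually_elim (simp add: complex_eq_iff)
qed


lemma vec_comp_meas[measurable]:
  fixes F :: "'a \<Rightarrow> complex^2"
  shows "F \<in> borel_measurable M \<Longrightarrow> (\<lambda>y. F y $ j) \<in> borel_measurable M"
proof -
  have "(\<lambda>v::complex^2. v $ j) \<in> borel_measurable borel"
    by (intro borel_measurable_continuous_onI continuous_on_component continuous_on_id)
  moreover assume "F \<in> borel_measurable M"
  ultimately show ?thesis using measurable_compose by blast
qed

lemma trunc_comp_int:
  fixes F :: "real^2 \<Rightarrow> complex^2"
  assumes Fm[measurable]: "F \<in> borel_measurable borel"
    and F2: "integrable lborel (\<lambda>y. (norm (F y))^2)"
  shows "integrable lborel (\<lambda>y. (if norm y \<le> R then F y else 0) $ j)"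
proof (rule Bochner_Integration.integrable_bound[where f="\<lambda>y. indicator (cball 0 R) y + (norm (F y))^2"])
  have "integrable lborel (indicator (cball (0::real^2) R) :: real^2 \<Rightarrow> real)"
    using emeasure_bounded_finite[OF bounded_cball] by (intro integrable_real_indicator) auto
  then show "integrable lborel (\<lambda>y. indicator (cball 0 R) y + (norm (F y))^2 :: real)"
    using F2 by auto
  show "(\<lambda>y. (if norm y \<le> R then F y else 0) $ j) \<in> borel_measurable lborel"
    by measurable
  show "AE y in lborel. norm ((if norm y \<le> R then F y else 0) $ j) \<le> norm (indicator (cball 0 R) y + (norm (F y))^2 :: real)"
  proof (intro AE_I2)
    fix y :: "real^2"
    show "norm ((if norm y \<le> R then F y else 0) $ j) \<le> norm (indicator (cball 0 R) y + (norm (F y))^2 :: real)"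
    proof (cases "norm y \<le> R")
      case True
      have "norm (F y $ j) \<le> norm (F y)" by (rule Finite_Cartesian_Product.norm_nth_le)
      also have "\<dots> \<le> 1 + (norm (F y))^2"
      proof -
        have "0 \<le> (norm (F y) - 1)^2" by simp
        then have a: "0 \<le> norm (F y) * norm (F y) - 2 * norm (F y) + 1" by (simp add: power2_eq_square algebra_simps)
        have b: "0 \<le> norm (F y) * norm (F y)" by simp
        show ?thesis unfolding power2_eq_square using a b by linarith
      qed
      finally show ?thesis using True by (simp add: indicator_def)
    qed simp
  qed
qed

theorem theorem3p1:
  fixes lam mu \<omega>min \<omega>max :: real and F G :: "real^2 \<Rightarrow> complex^2"
  assumes "mu > 0" and "2 * mu + lam > 0"
    and "0 < \<omega>min" and "\<omega>min < \<omega>max"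
    and "L2_compact_source F" and "L2_compact_source G"
    and "\<forall>x\<in>unit_circle. \<forall>\<omega>\<in>{\<omega>min<..<\<omega>max}.
           farfield_p lam mu F x \<omega> = farfield_p lam mu G x \<omega>"
    and "\<forall>x\<in>unit_circle. \<forall>\<omega>\<in>{\<omega>min<..<\<omega>max}.
           farfield_s lam mu F x \<omega> = farfield_s lam mu G x \<omega>"
  shows "AE y in lborel. F y = G y"
proof -
  from assms(5) obtain RF where RF: "AE y in lborel. RF < norm y \<longrightarrow> F y = 0"
    and Fm0: "F \<in> borel_measurable lborel" and F2: "integrable lborel (\<lambda>y. (norm (F y))^2)"
    unfolding L2_compact_source_def by blast
  from assms(6) obtain RG where RG: "AE y in lborel. RG < norm y \<longrightarrow> G y = 0"
    and Gm0: "G \<in> borel_measurable lborel" and G2: "integrable lborel (\<lambda>y. (norm (G y))^2)"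
    unfolding L2_compact_source_def by blast
  have Fm[measurable]: "F \<in> borel_measurable borel" using Fm0 by simp
  have Gm[measurable]: "G \<in> borel_measurable borel" using Gm0 by simp
  define R where "R = max 0 (max RF RG)"
  have R0: "0 \<le> R" by (simp add: R_def)
  define Ft where "Ft = (\<lambda>y. if norm y \<le> R then F y else 0)"
  define Gt where "Gt = (\<lambda>y. if norm y \<le> R then G y else 0)"
  have FFt: "AE y in lborel. F y = Ft y" using RF by eventually_elim (auto simp: Ft_def R_def)
  have GGt: "AE y in lborel. G y = Gt y" using RG by eventually_elim (auto simp: Gt_def R_def)
  have Ftm[measurable]: "Ft \<in> borel_measurable borel" unfolding Ft_def by measurable
  have Gtm[measurable]: "Gt \<in> borel_measurable borel" unfolding Gt_def by measurable
  have Fti: "integrable lborel (\<lambda>y. Ft y $ j)" for j unfolding Ft_def by (rule trunc_comp_int[OF Fm F2])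
  have Gti: "integrable lborel (\<lambda>y. Gt y $ j)" for j unfolding Gt_def by (rule trunc_comp_int[OF Gm G2])
  define h where "h = (\<lambda>j y. Ft y $ j - Gt y $ j)"
  have hi: "integrable lborel (h j)" for j unfolding h_def using Fti Gti by auto
  have hs: "R < norm y \<Longrightarrow> h j y = 0" for j y by (simp add: h_def Ft_def Gt_def)
  define gd where "gd = (\<lambda>(d::real^2) y. complex_of_real (d$1) * h 1 y + complex_of_real (d$2) * h 2 y)"
  have gi: "integrable lborel (gd d)" for d unfolding gd_def using hi by auto
  have gs: "R < norm y \<Longrightarrow> gd d y = 0" for d y by (simp add: gd_def hs)
  have nE: "norm (exp (- \<i> * complex_of_real r)) = 1" for r by (simp add: norm_exp_eq_Re)
  have FFdiff: "(LINT y|lborel. exp (- \<i> * complex_of_real (\<phi> y)) * cdot d (F y))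
      - (LINT y|lborel. exp (- \<i> * complex_of_real (\<phi> y)) * cdot d (G y))
      = (LINT y|lborel. exp (- \<i> * complex_of_real (\<phi> y)) * gd d y)"
    if \<phi>m[measurable]: "\<phi> \<in> borel_measurable borel" for d \<phi>
  proof -
    define E where "E = (\<lambda>y. exp (- \<i> * complex_of_real (\<phi> y)))"
    have Em[measurable]: "E \<in> borel_measurable borel" unfolding E_def by measurable
    have nE': "norm (E y) \<le> 1" for y unfolding E_def using nE by simp
    have "(LINT y|lborel. E y * cdot d (F y)) = (LINT y|lborel. E y * cdot d (Ft y))"
      by (rule integral_cong_AE) (use FFt in \<open>auto simp: cdot_def\<close>)
    moreover have "(LINT y|lborel. E y * cdot d (G y)) = (LINT y|lborel. E y * cdot d (Gt y))"
      by (rule integral_cong_AE) (use GGt in \<open>auto simp: cdot_def\<close>)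
    moreover have i1: "integrable lborel (\<lambda>y. E y * cdot d (Ft y))"
      unfolding cdot_def by (rule integrable_bdd_mult[OF _ _ nE']) (use Fti in auto)
    moreover have i2: "integrable lborel (\<lambda>y. E y * cdot d (Gt y))"
      unfolding cdot_def by (rule integrable_bdd_mult[OF _ _ nE']) (use Gti in auto)
    moreover have "(LINT y|lborel. E y * cdot d (Ft y) - E y * cdot d (Gt y)) = (LINT y|lborel. E y * gd d y)"
      by (rule Bochner_Integration.integral_cong) (auto simp: cdot_def gd_def h_def algebra_simps)
    ultimately show ?thesis by (simp add: E_def)
  qed
  have sp: "sqrt (lam + 2 * mu) > 0" using assms(2) by simp
  have ss: "sqrt mu > 0" using assms(1) by simp
  have P: "(LINT y|lborel. exp (- \<i> * complex_of_real (t * (x \<bullet> y))) * gd x y) = 0"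
    if x: "x \<in> unit_circle" for x t
  proof (rule fourier_line_zero[OF gi gs R0, of "\<omega>min / sqrt (lam + 2 * mu)" "\<omega>max / sqrt (lam + 2 * mu)"])
    show "\<omega>min / sqrt (lam + 2 * mu) < \<omega>max / sqrt (lam + 2 * mu)"
      using assms(4) sp by (simp add: divide_strict_right_mono)
    fix s assume s1: "\<omega>min / sqrt (lam + 2 * mu) < s" and s2: "s < \<omega>max / sqrt (lam + 2 * mu)"
    define \<omega> where "\<omega> = s * sqrt (lam + 2 * mu)"
    have \<omega>: "\<omega> \<in> {\<omega>min<..<\<omega>max}" using s1 s2 sp by (simp add: \<omega>_def field_simps)
    have k: "kp lam mu \<omega> = s" using sp by (simp add: kp_def \<omega>_def)
    have "farfield_p lam mu F x \<omega> - farfield_p lam mu G x \<omega> = 0" using assms(7) x \<omega> by simp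
    then show "(LINT y|lborel. exp (- \<i> * complex_of_real (s * (x \<bullet> y))) * gd x y) = 0"
      unfolding farfield_p_def k by (subst (asm) FFdiff) auto
  qed
  have S: "(LINT y|lborel. exp (- \<i> * complex_of_real (t * (x \<bullet> y))) * gd (perp x) y) = 0"
    if x: "x \<in> unit_circle" for x t
  proof (rule fourier_line_zero[OF gi gs R0, of "\<omega>min / sqrt mu" "\<omega>max / sqrt mu"])
    show "\<omega>min / sqrt mu < \<omega>max / sqrt mu"
      using assms(4) ss by (simp add: divide_strict_right_mono)
    fix s assume s1: "\<omega>min / sqrt mu < s" and s2: "s < \<omega>max / sqrt mu"
    define \<omega> where "\<omega> = s * sqrt mu"
    have \<omega>: "\<omega> \<in> {\<omega>min<..<\<omega>max}" using s1 s2 ss by (simp add: \<omega>_def field_simps)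
    have k: "ks mu \<omega> = s" using ss by (simp add: ks_def \<omega>_def)
    have "farfield_s lam mu F x \<omega> - farfield_s lam mu G x \<omega> = 0" using assms(8) x \<omega> by simp
    then show "(LINT y|lborel. exp (- \<i> * complex_of_real (s * (x \<bullet> y))) * gd (perp x) y) = 0"
      unfolding farfield_s_def k by (subst (asm) FFdiff) auto
  qed
  define I where "I = (\<lambda>j \<xi>. LINT y|lborel. exp (- \<i> * complex_of_real (\<xi> \<bullet> y)) * h j y)"
  have lin: "(LINT y|lborel. exp (- \<i> * complex_of_real (\<xi> \<bullet> y)) * gd d y)
      = complex_of_real (d$1) * I 1 \<xi> + complex_of_real (d$2) * I 2 \<xi>" for \<xi> d
  proof -
    have ij: "integrable lborel (\<lambda>y. exp (- \<i> * complex_of_real (\<xi> \<bullet> y)) * h j y)" for j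
      by (rule integrable_bdd_mult[OF hi _ , where B=1]) (auto simp: nE)
    have "(LINT y|lborel. exp (- \<i> * complex_of_real (\<xi> \<bullet> y)) * gd d y)
       = (LINT y|lborel. complex_of_real (d$1) * (exp (- \<i> * complex_of_real (\<xi> \<bullet> y)) * h 1 y)
            + complex_of_real (d$2) * (exp (- \<i> * complex_of_real (\<xi> \<bullet> y)) * h 2 y))"
      by (rule Bochner_Integration.integral_cong) (auto simp: gd_def algebra_simps)
    also have "\<dots> = complex_of_real (d$1) * I 1 \<xi> + complex_of_real (d$2) * I 2 \<xi>"
      using ij[of 1] ij[of 2] by (simp add: I_def)
    finally show ?thesis .
  qed
  have I0: "I 1 \<xi> = 0 \<and> I 2 \<xi> = 0" for \<xi>
  proof -
    define x where "x = (if \<xi> = 0 then axis 1 1 else \<xi> /\<^sub>R norm \<xi>)"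
    define t where "t = norm \<xi>"
    have xu: "x \<in> unit_circle" by (simp add: x_def unit_circle_def)
    have tx: "t *\<^sub>R x = \<xi>" by (simp add: x_def t_def)
    have tinner: "t * (x \<bullet> y) = \<xi> \<bullet> y" for y using tx by (metis inner_scaleR_left)
    have "x \<bullet> x = 1" using xu by (simp add: unit_circle_def power2_norm_eq_inner[symmetric])
    then have n1: "x$1 * x$1 + x$2 * x$2 = 1" by (simp add: inner_vec_def sum_2)
    have p1: "perp x $ 1 = - (x$2)" "perp x $ 2 = x$1" by (simp_all add: perp_def)
    have e1: "complex_of_real (x$1) * I 1 \<xi> + complex_of_real (x$2) * I 2 \<xi> = 0"
      using P[OF xu, of t] lin[of \<xi> x] by (simp add: tinner)
    have e2: "- complex_of_real (x$2) * I 1 \<xi> + complex_of_real (x$1) * I 2 \<xi> = 0"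
      using S[OF xu, of t] lin[of \<xi> "perp x"] by (simp add: tinner p1)
    have n1c: "complex_of_real (x$1) * complex_of_real (x$1) + complex_of_real (x$2) * complex_of_real (x$2) = 1"
      using n1 by (metis of_real_1 of_real_add of_real_mult)
    have "I 1 \<xi> = 0" using e1 e2 n1c by algebra
    moreover have "I 2 \<xi> = 0" using e1 e2 n1c by algebra
    ultimately show ?thesis by simp
  qed
  have h1: "AE y in lborel. h 1 y = 0"
    by (rule fourier_unique[OF hi hs]) (use I0 in \<open>auto simp: I_def\<close>)
  have h2: "AE y in lborel. h 2 y = 0"
    by (rule fourier_unique[OF hi hs]) (use I0 in \<open>auto simp: I_def\<close>)
  show ?thesis
    using FFt GGt h1 h2
  proof eventually_elim
    case (elim y)
    have "Ft y = Gt y" using elim(3,4) by (simp add: h_def vec_eq_iff forall_2)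
    then show ?case using elim(1,2) by simp
  qed
qed

end
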